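(* Let $\gamma>0$. There exists a sequence of positive numbers $(\alpha_n)_{n\ge2}$ such that, with the convention $\alpha_1=0$, $$\sup_{n\ge2}\Big\{(1+2\nu_n)\Big(p_n+\frac{|q_n|}{\alpha_n}+|q_{n-1}|\,\alpha_{n-1}\Big)\Big\}<1 .$$
   Context: For $\gamma>0$ and integers $n\ge1$ define $\nu_n=\nu_n(\gamma)=(-1)^n\frac{\Gamma(2\gamma)\Gamma(n+\gamma)}{\Gamma(\gamma)\Gamma(n+2\gamma)}$, $p_n=p_n(\gamma)=\frac{2n(n-1)+(6n-4)\gamma+6\gamma^2}{(2n+3\gamma)(2n+3\gamma-2)}=\frac12+\frac{-\gamma+\frac32\gamma^2}{(2n+3\gamma)(2n+3\gamma-2)}$, $q_n=q_n(\gamma)=-\frac{1}{2n+3\gamma}\sqrt{\frac{(n+3\gamma-1)(n+1)(n+\gamma)}{(2n+3\gamma+1)(2n+3\gamma-1)}}$. (These arise from the Jacobi polynomials orthogonal for Beta$(\gamma,2\gamma)$: $p_n$ and $q_n$ are the diagonal and normalized off-diagonal entries of multiplication by $1-u$.) *)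

theory Defs
  imports "HOL-Analysis.Analysis"
begin

definition nu :: "real \<Rightarrow> nat \<Rightarrow> real" where
  "nu \<gamma> n = (-1) ^ n * (Gamma (2*\<gamma>) * Gamma (real n + \<gamma>)) /
                (Gamma \<gamma> * Gamma (real n + 2*\<gamma>))"

definition p :: "real \<Rightarrow> nat \<Rightarrow> real" where
  "p \<gamma> n = (2 * real n * (real n - 1) + (6 * real n - 4) * \<gamma> + 6 * \<gamma>^2) /
              ((2 * real n + 3*\<gamma>) * (2 * real n + 3*\<gamma> - 2))"

definition q :: "real \<Rightarrow> nat \<Rightarrow> real" where
  "q \<gamma> n = - (1 / (2 * real n + 3*\<gamma>)) *
     sqrt (((real n + 3*\<gamma> - 1) * (real n + 1) * (real n + \<gamma>)) /
           ((2 * real n + 3*\<gamma> + 1) * (2 * real n + 3*\<gamma> - 1)))"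

end

theory Submission
  imports Defs
begin


definition rr :: "real \<Rightarrow> nat \<Rightarrow> real" where
  "rr g n = (\<Prod>k<n. (g + real k) / (2*g + real k))"

lemma Gamma_shift:
  fixes g :: real assumes "g > 0"
  shows "Gamma (real n + g) = Gamma g * (\<Prod>k<n. (g + real k))"
proof (induction n)
  case 0 then show ?case by simp
next
  case (Suc n)
  have nz: "real n + g \<notin> \<int>\<^sub>\<le>\<^sub>0" using assms by (auto dest: nonpos_Ints_nonpos)
  have "Gamma (real (Suc n) + g) = Gamma ((real n + g) + 1)" by (simp add: add_ac)
  also have "\<dots> = (real n + g) * Gamma (real n + g)" using Gamma_plus1[OF nz] .
  finally show ?case using Suc by (simp add: add_ac mult_ac)
qed

lemma nu_eq:
  fixes g :: real assumes "g > 0"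
  shows "nu g n = (-1)^n * rr g n"
proof -
  have a: "Gamma (real n + g) = Gamma g * (\<Prod>k<n. (g + real k))" using Gamma_shift[OF assms] .
  have b: "Gamma (real n + 2*g) = Gamma (2*g) * (\<Prod>k<n. (2*g + real k))" using Gamma_shift[of "2*g"] assms by simp
  have g1: "Gamma g > 0" "Gamma (2*g) > 0" using assms by auto
  have "rr g n = (\<Prod>k<n. (g + real k)) / (\<Prod>k<n. (2*g + real k))"
    unfolding rr_def by (rule prod_dividef)
  then show ?thesis unfolding nu_def a b using g1 by (simp add: field_simps)
qed

lemma rr_Suc: "rr g (Suc n) = rr g n * ((g + real n) / (2*g + real n))"
  unfolding rr_def by simp

lemma rr_pos: "g > 0 \<Longrightarrow> rr g n > 0"
  unfolding rr_def by (intro prod_pos) auto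

lemma rr_1: "g > 0 \<Longrightarrow> rr g 1 = 1/2"
  unfolding rr_def by simp

lemma rr_2: "g > 0 \<Longrightarrow> rr g 2 = (g+1)/(2*(2*g+1))"
  unfolding rr_def by (simp add: numeral_2_eq_2 field_simps)

lemma rr_dec: "g > 0 \<Longrightarrow> rr g (Suc n) \<le> rr g n"
proof -
  assume g: "g > 0"
  have "(g + real n) / (2*g + real n) \<le> 1" using g by simp
  then show ?thesis unfolding rr_Suc using rr_pos[OF g, of n]
    by (metis mult_left_le less_imp_le)
qed

lemma rr_mono: assumes g: "g > 0" and mn: "m \<le> n" shows "rr g n \<le> rr g m"
  using mn
proof (induction n rule: dec_induct)
  case base then show ?case by simp
next
  case (step n) then show ?case using rr_dec[OF g, of n] by linarith
qed

lemma rr_le2: "g > 0 \<Longrightarrow> n \<ge> 2 \<Longrightarrow> rr g n \<le> rr g 2"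
  by (rule rr_mono)



definition At :: "real \<Rightarrow> real \<Rightarrow> real" where
  "At g x = (x+3*g-1)*(x+1)/((2*x+3*g)*(2*x+3*g-1)*(2*x+3*g+1))"

definition Mn :: "real \<Rightarrow> real \<Rightarrow> real" where
  "Mn g x = 2*(x*(x-1)+(3*x-2)*g)/((2*x+3*g)*(2*x+3*g-2))"

lemma q_sq:
  assumes g: "g > 0" and n: "n \<ge> 1"
  shows "\<bar>q g n\<bar>^2 = (real n+3*g-1)*(real n+1)*(real n+g)/((2*real n+3*g+1)*(2*real n+3*g-1)*(2*real n+3*g)^2)"
proof -
  define x where "x = real n"
  have x: "x \<ge> 1" using n unfolding x_def by simp
  define X where "X = ((x + 3*g - 1) * (x + 1) * (x + g)) / ((2 * x + 3*g + 1) * (2 * x + 3*g - 1))"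
  have X0: "X \<ge> 0" unfolding X_def using x g by (intro divide_nonneg_pos mult_nonneg_nonneg mult_pos_pos) auto
  have t: "2*x+3*g > 0" using x g by simp
  have qe: "q g n = -(1/(2*x+3*g)) * sqrt X" unfolding q_def X_def x_def by simp
  have "\<bar>q g n\<bar> = sqrt X / (2*x+3*g)"
    unfolding qe using t X0 by (simp add: abs_mult)
  then have "\<bar>q g n\<bar>^2 = X / (2*x+3*g)^2" using X0 by (simp add: power_divide)
  then show ?thesis unfolding X_def x_def by (simp add: field_simps)
qed

lemma q_pos:
  assumes g: "g > 0" and n: "n \<ge> 1"
  shows "\<bar>q g n\<bar> > 0"
proof -
  have "\<bar>q g n\<bar>^2 > 0" unfolding q_sq[OF g n] using g n
    by (intro divide_pos_pos mult_pos_pos) auto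
  then show ?thesis by (metis abs_ge_zero less_eq_real_def power_zero_numeral zero_less_numeral)
qed

lemma omp:
  assumes g: "g > 0" and n: "n \<ge> 1"
  shows "1 - p g n = (2*real n^2 + 6*real n*g + 3*g^2 - 2*real n - 2*g)/((2*real n+3*g)*(2*real n+3*g-2))"
proof -
  have "(2*real n+3*g)*(2*real n+3*g-2) > 0" using g n by (intro mult_pos_pos) auto
  then show ?thesis unfolding p_def by (simp add: field_simps power2_eq_square)
qed

lemma p_pos:
  assumes g: "g > 0" and n: "n \<ge> 1"
  shows "p g n > 0"
  unfolding p_def using g n by (intro divide_pos_pos mult_pos_pos add_nonneg_pos add_nonneg_nonneg) auto

lemma p_le:
  assumes g: "g > 0" and n: "n \<ge> 1"
  shows "p g n \<le> 2/3"
proof -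
  have d: "(2*real n+3*g)*(2*real n+3*g-2) > 0" using g n by (intro mult_pos_pos) auto
  have h1: "real n \<le> real n * real n" using n by simp
  have h2: "0 \<le> g * real n" using g by simp
  have "3*(2 * real n * (real n - 1) + (6 * real n - 4) * g + 6 * g^2) \<le> 2*((2*real n+3*g)*(2*real n+3*g-2))"
    using h1 h2 by (simp add: algebra_simps power2_eq_square)
  then show ?thesis unfolding p_def using d by (simp add: divide_le_eq mult.commute)
qed

lemma p_lt1:
  assumes g: "g > 0" and n: "n \<ge> 1"
  shows "1 - p g n > 0" using p_le[OF g n] by simp

lemma KA:
  assumes g: "g > 0" and n: "n \<ge> 1"
  shows "\<bar>q g n\<bar>^2 / (1 - p g n) \<le> At g (real n)"
proof -
  define x where "x = real n"
  have x: "x \<ge> 1" using n unfolding x_def by simp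
  define t where "t = 2*x+3*g"
  define E where "E = 2*x^2 + 6*x*g + 3*g^2 - 2*x - 2*g"
  have t: "t > 2" unfolding t_def using x g by simp
  have Ee: "E = 2*x*(x-1) + 2*g*(3*x-1) + 3*g^2" unfolding E_def by (simp add: algebra_simps power2_eq_square)
  have E: "E > 0" unfolding Ee using x g
    by (intro add_nonneg_pos add_pos_nonneg mult_pos_pos mult_nonneg_nonneg) auto
  define c where "c = (x+3*g-1)*(x+1)/((t+1)*(t-1)*t*E)"
  have nz: "t \<noteq> 0" "t - 1 \<noteq> 0" "t + 1 \<noteq> 0" "t - 2 \<noteq> 0" "E \<noteq> 0" using t E by auto
  have qs: "\<bar>q g n\<bar>^2 = (x+3*g-1)*(x+1)*(x+g)/((t+1)*(t-1)*t^2)"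
    unfolding q_sq[OF g n] x_def[symmetric] t_def by simp
  have os: "1 - p g n = E / (t*(t-2))"
    unfolding omp[OF g n] x_def[symmetric] t_def E_def by simp
  have l: "\<bar>q g n\<bar>^2 / (1 - p g n) = c * ((x+g)*(t-2))"
    unfolding qs os c_def divide_divide_times_eq times_divide_eq_left
    apply (subst frac_eq_eq)
    using nz apply simp
    using nz apply simp
    by (simp add: power2_eq_square algebra_simps)
  have As: "At g (real n) = (x+3*g-1)*(x+1)/(t*(t-1)*(t+1))" unfolding At_def x_def t_def by simp
  have r: "At g (real n) = c * E"
    unfolding As c_def times_divide_eq_left
    apply (subst frac_eq_eq)
    using nz apply simp
    using nz apply simp
    by (simp add: algebra_simps)
  have c0: "c \<ge> 0" unfolding c_def using x g t E by (intro divide_nonneg_pos mult_nonneg_nonneg mult_pos_pos) auto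
  have "(x+g)*(t-2) \<le> E" unfolding t_def E_def using x g by (simp add: algebra_simps power2_eq_square)
  then show ?thesis unfolding l r using c0 by (simp add: mult_left_mono)
qed

lemma KB:
  assumes g: "g > 0" and n: "n \<ge> 1"
  shows "\<bar>q g n\<bar>^2 / (1 - p g (n+1)) \<le> At g (real n)"
proof -
  define x where "x = real n"
  have x: "x \<ge> 1" using n unfolding x_def by simp
  define t where "t = 2*x+3*g"
  define E where "E = 2*x^2 + 2*x + 6*x*g + 4*g + 3*g^2"
  have t: "t > 2" unfolding t_def using x g by simp
  have E: "E > 0" unfolding E_def using x g
    by (simp add: add_pos_nonneg)
  have o1: "1 - p g (n+1) = (2*(x+1)^2 + 6*(x+1)*g + 3*g^2 - 2*(x+1) - 2*g)/((2*(x+1)+3*g)*(2*(x+1)+3*g-2))"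
    using omp[OF g, of "n+1"] unfolding x_def by (simp add: algebra_simps)
  have e1: "2*(x+1)^2 + 6*(x+1)*g + 3*g^2 - 2*(x+1) - 2*g = E" unfolding E_def by (simp add: algebra_simps power2_eq_square)
  have e2: "(2*(x+1)+3*g)*(2*(x+1)+3*g-2) = (t+2)*t" unfolding t_def by (simp add: algebra_simps)
  have o: "1 - p g (n+1) = E/((t+2)*t)" unfolding o1 e1 e2 ..
  define c where "c = (x+3*g-1)*(x+1)/((t+1)*(t-1)*t*E)"
  have nz: "t \<noteq> 0" "t - 1 \<noteq> 0" "t + 1 \<noteq> 0" "t + 2 \<noteq> 0" "E \<noteq> 0" using t E by auto
  have qs: "\<bar>q g n\<bar>^2 = (x+3*g-1)*(x+1)*(x+g)/((t+1)*(t-1)*t^2)"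
    unfolding q_sq[OF g n] x_def[symmetric] t_def by simp
  have l: "\<bar>q g n\<bar>^2 / (1 - p g (n+1)) = c * ((x+g)*(t+2))"
    unfolding qs o c_def divide_divide_times_eq times_divide_eq_left
    apply (subst frac_eq_eq)
    using nz apply simp
    using nz apply simp
    by (simp add: power2_eq_square algebra_simps)
  have As: "At g (real n) = (x+3*g-1)*(x+1)/(t*(t-1)*(t+1))" unfolding At_def x_def t_def by simp
  have r: "At g (real n) = c * E"
    unfolding As c_def times_divide_eq_left
    apply (subst frac_eq_eq)
    using nz apply simp
    using nz apply simp
    by (simp add: algebra_simps)
  have c0: "c \<ge> 0" unfolding c_def using x g t E by (intro divide_nonneg_pos mult_nonneg_nonneg mult_pos_pos) auto
  have "(x+g)*(t+2) \<le> E" unfolding t_def E_def using x g by (simp add: algebra_simps power2_eq_square)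
  then show ?thesis unfolding l r using c0 by (simp add: mult_left_mono)
qed



lemma frac_le_cross:
  fixes a b c d :: real
  assumes "b > 0" "d > 0" "a*d \<le> c*b"
  shows "a/b \<le> c/d"
  using assms by (simp add: field_simps)

lemma K4_poly:
  fixes s g :: real assumes hs: "s \<ge> 0" and hg: "g \<ge> 0"
  defines "x \<equiv> s + 4" and "T \<equiv> 2*(s+4) + 3*g"
  shows "10000*(((x+3*g-2)*x)*(T*(T-1)*(T+1)) + 2*((x+3*g-1)*(x+1))*((T-2)*(T-3)*(T-1)))*(T*(T-2))
     \<le> 2401*(2*(x*(x-1)+(3*x-2)*g))*((T-2)*(T-3)*(T-1))*(T*(T-1)*(T+1))"
proof -
  have e: "2401*(2*(x*(x-1)+(3*x-2)*g))*((T-2)*(T-3)*(T-1))*(T*(T-1)*(T+1)) - 10000*(((x+3*g-2)*x)*(T*(T-1)*(T+1)) + 2*((x+3*g-1)*(x+1))*((T-2)*(T-3)*(T-1)))*(T*(T-2))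
     = 1139564160 + 4249773936 * g + 8293738464 * g^2 + 9227185380 * g^3 + 5936515920 * g^4 + 2188233144 * g^5 + 430040016 * g^6 + 35006580 * g^7 + 3889637184 * s + 13646619468 * s * g + 21807697938 * s * g^2 + 18792630126 * s * g^3 + 9042732540 * s * g^4 + 2355043248 * s * g^5 + 289688562 * s * g^6 + 10501974 * s * g^7 + 5346916648 * s ^ 2 + 16390585316 * s ^ 2 * g + 21114072450 * s ^ 2 * g^2 + 13892227920 * s ^ 2 * g^3 + 4781888460 * s ^ 2 * g^4 + 790306956 * s ^ 2 * g^5 + 45508554 * s ^ 2 * g^6 + 3968727536 * s ^ 3 + 10131127152 * s ^ 3 * g + 10154156160 * s ^ 3 * g^2 + 4833228960 * s ^ 3 * g^3 + 1066130640 * s ^ 3 * g^4 + 84015792 * s ^ 3 * g^5 + 1765594152 * s ^ 4 + 3571999040 * s ^ 4 * g + 2618468640 * s ^ 4 * g^2 + 805191840 * s ^ 4 * g^3 + 85571640 * s ^ 4 * g^4 + 486533696 * s ^ 5 + 728225664 * s ^ 5 * g + 347490720 * s ^ 5 * g^2 + 51861600 * s ^ 5 * g^3 + 81592512 * s ^ 6 + 80120768 * s ^ 6 * g + 18670176 * s ^ 6 * g^2 + 7645184 * s ^ 7 + 3687936 * s ^ 7 * g + 307328 * s ^ 8"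
    unfolding x_def T_def by algebra
  have "0 \<le> 1139564160 + 4249773936 * g + 8293738464 * g^2 + 9227185380 * g^3 + 5936515920 * g^4 + 2188233144 * g^5 + 430040016 * g^6 + 35006580 * g^7 + 3889637184 * s + 13646619468 * s * g + 21807697938 * s * g^2 + 18792630126 * s * g^3 + 9042732540 * s * g^4 + 2355043248 * s * g^5 + 289688562 * s * g^6 + 10501974 * s * g^7 + 5346916648 * s ^ 2 + 16390585316 * s ^ 2 * g + 21114072450 * s ^ 2 * g^2 + 13892227920 * s ^ 2 * g^3 + 4781888460 * s ^ 2 * g^4 + 790306956 * s ^ 2 * g^5 + 45508554 * s ^ 2 * g^6 + 3968727536 * s ^ 3 + 10131127152 * s ^ 3 * g + 10154156160 * s ^ 3 * g^2 + 4833228960 * s ^ 3 * g^3 + 1066130640 * s ^ 3 * g^4 + 84015792 * s ^ 3 * g^5 + 1765594152 * s ^ 4 + 3571999040 * s ^ 4 * g + 2618468640 * s ^ 4 * g^2 + 805191840 * s ^ 4 * g^3 + 85571640 * s ^ 4 * g^4 + 486533696 * s ^ 5 + 728225664 * s ^ 5 * g + 347490720 * s ^ 5 * g^2 + 51861600 * s ^ 5 * g^3 + 81592512 * s ^ 6 + 80120768 * s ^ 6 * g + 18670176 * s ^ 6 * g^2 + 7645184 * s ^ 7 + 3687936 * s ^ 7 * g + 307328 * s ^ 8"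
    using hs hg by (intro add_nonneg_nonneg mult_nonneg_nonneg zero_le_power; simp)
  with e show ?thesis by linarith
qed

lemma K2_poly:
  fixes g :: real assumes hg: "g \<ge> 0"
  defines "x \<equiv> 2::real" and "T \<equiv> 4 + 3*g"
  shows "10000*(4*g+3)*((x+3*g-1)*(x+1))*(T*(T-2)) \<le> 2401*(2*(x*(x-1)+(3*x-2)*g))*(2*g+2)*(T*(T-1)*(T+1))"
proof -
  have e: "2401*(2*(x*(x-1)+(3*x-2)*g))*(2*g+2)*(T*(T-1)*(T+1)) - 10000*(4*g+3)*((x+3*g-1)*(x+1))*(T*(T-2))
     = 432480 + 1425768*g + 1794408*g^2 + 2168664*g^3 + 2464776*g^4 + 1037232*g^5"
    unfolding x_def T_def by algebra
  have "0 \<le> 432480 + 1425768*g + 1794408*g^2 + 2168664*g^3 + 2464776*g^4 + 1037232*g^5"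
    using hg by (intro add_nonneg_nonneg mult_nonneg_nonneg zero_le_power; simp)
  with e show ?thesis by linarith
qed

lemma K4:
  fixes x g :: real assumes x: "x \<ge> 4" and g: "g > 0"
  shows "(10000/2401)*(At g (x-1) + 2*At g x) \<le> Mn g x"
proof -
  define T where "T = 2*x+3*g"
  have T: "T \<ge> 8" unfolding T_def using x g by simp
  have e1: "At g (x-1) = ((x+3*g-2)*x)/((T-2)*(T-3)*(T-1))"
    unfolding At_def T_def by (simp add: algebra_simps)
  have e2: "At g x = ((x+3*g-1)*(x+1))/(T*(T-1)*(T+1))"
    unfolding At_def T_def by (simp add: algebra_simps)
  have e3: "Mn g x = (2*(x*(x-1)+(3*x-2)*g))/(T*(T-2))"
    unfolding Mn_def T_def by (simp add: algebra_simps)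
  have P: "10000*(((x+3*g-2)*x)*(T*(T-1)*(T+1)) + 2*((x+3*g-1)*(x+1))*((T-2)*(T-3)*(T-1)))*(T*(T-2))
     \<le> 2401*(2*(x*(x-1)+(3*x-2)*g))*((T-2)*(T-3)*(T-1))*(T*(T-1)*(T+1))"
    using K4_poly[of "x-4" g] x g unfolding T_def by simp
  define a1 where "a1 = (x+3*g-2)*x"
  define a2 where "a2 = (x+3*g-1)*(x+1)"
  define d1 where "d1 = (T-2)*(T-3)*(T-1)"
  define d2 where "d2 = T*(T-1)*(T+1)"
  define mN where "mN = 2*(x*(x-1)+(3*x-2)*g)"
  define mD where "mD = T*(T-2)"
  have d1: "d1 > 0" unfolding d1_def using T by (intro mult_pos_pos) auto
  have d2: "d2 > 0" unfolding d2_def using T by (intro mult_pos_pos) auto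
  have mD: "mD > 0" unfolding mD_def using T by (intro mult_pos_pos) auto
  have P': "10000*(a1*d2 + 2*a2*d1)*mD \<le> 2401*mN*d1*d2"
    using P unfolding a1_def a2_def d1_def d2_def mN_def mD_def by simp
  have "(10000/2401)*(a1/d1 + 2*(a2/d2)) = (10000*(a1*d2 + 2*a2*d1))/(2401*(d1*d2))"
    using d1 d2 by (simp add: field_simps)
  also have "\<dots> \<le> mN/mD"
    apply (rule frac_le_cross)
    using d1 d2 apply simp
    using mD apply simp
    using P' by (simp add: algebra_simps)
  finally show ?thesis unfolding e1 e2 e3 a1_def[symmetric] a2_def[symmetric] d1_def[symmetric]
      d2_def[symmetric] mN_def[symmetric] mD_def[symmetric] .
qed

lemma K2:
  fixes g :: real assumes g: "g > 0"
  shows "(10000/2401)*((1 + (2*g+1)/(2*g+2))*At g 2) \<le> Mn g 2"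
proof -
  define T where "T = 4+3*g"
  have T: "T \<ge> 4" unfolding T_def using g by simp
  have e2: "At g 2 = ((2+3*g-1)*(2+1))/(T*(T-1)*(T+1))"
    unfolding At_def T_def by (simp add: algebra_simps)
  have e3: "Mn g 2 = (2*(2*(2-1)+(3*2-2)*g))/(T*(T-2))"
    unfolding Mn_def T_def by (simp add: algebra_simps)
  have ec: "1 + (2*g+1)/(2*g+2) = (4*g+3)/(2*g+2)" using g by (simp add: field_simps)
  have P: "10000*(4*g+3)*((2+3*g-1)*(2+1))*(T*(T-2)) \<le> 2401*(2*(2*(2-1)+(3*2-2)*g))*(2*g+2)*(T*(T-1)*(T+1))"
    using K2_poly[of g] g unfolding T_def by simp
  define a2 where "a2 = (2+3*g-1)*(2+1::real)"
  define d2 where "d2 = T*(T-1)*(T+1)"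
  define mN where "mN = 2*(2*(2-1)+(3*2-2)*g::real)"
  define mD where "mD = T*(T-2)"
  have d2: "d2 > 0" unfolding d2_def using T by (intro mult_pos_pos) auto
  have mD: "mD > 0" unfolding mD_def using T by (intro mult_pos_pos) auto
  have g2: "2*g+2 > 0" using g by simp
  have P': "10000*(4*g+3)*a2*mD \<le> 2401*mN*(2*g+2)*d2"
    using P unfolding a2_def d2_def mN_def mD_def by simp
  have "(10000/2401)*(((4*g+3)/(2*g+2))*(a2/d2)) = (10000*(4*g+3)*a2)/(2401*((2*g+2)*d2))"
    using d2 g2 by (simp add: field_simps)
  also have "\<dots> \<le> mN/mD"
    apply (rule frac_le_cross)
    using d2 g2 apply simp
    using mD apply simp
    using P' by (simp add: algebra_simps)
  finally show ?thesis unfolding ec e2 e3 a2_def[symmetric] d2_def[symmetric] mN_def[symmetric] mD_def[symmetric] .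
qed



lemma M_low:
  fixes x g :: real assumes x: "x \<ge> 2" and g: "g > 0"
  shows "2/(2+3*g)^2 \<le> Mn g x"
proof -
  define s where "s = x - 2"
  have s: "s \<ge> 0" using x unfolding s_def by simp
  have xs: "x = s + 2" unfolding s_def by simp
  define T where "T = 2*x+3*g"
  have T: "T > 2" unfolding T_def using x g by simp
  have mD: "T*(T-2) > 0" using T by simp
  have e: "(2*(x*(x-1)+(3*x-2)*g))*(2+3*g)^2 - 2*(T*(T-2)) = 44 * g + 114 * g^2 + 72 * g^3 + 72 * s * g + 126 * s * g^2 + 54 * s * g^3 + 24 * s ^ 2 * g + 18 * s ^ 2 * g^2"
    unfolding T_def xs by algebra
  have "0 \<le> 44 * g + 114 * g^2 + 72 * g^3 + 72 * s * g + 126 * s * g^2 + 54 * s * g^3 + 24 * s ^ 2 * g + 18 * s ^ 2 * g^2"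
    using s g by (intro add_nonneg_nonneg mult_nonneg_nonneg zero_le_power; simp)
  then have "2*(T*(T-2)) \<le> (2*(x*(x-1)+(3*x-2)*g))*(2+3*g)^2" using e by linarith
  then have "2/(2+3*g)^2 \<le> (2*(x*(x-1)+(3*x-2)*g))/(T*(T-2))"
    using mD g by (intro frac_le_cross) auto
  then show ?thesis unfolding Mn_def T_def .
qed

lemma S_lemma:
  assumes g: "g > 0" and n: "n \<ge> 2" and w0: "g/(2*g+1) \<le> w"
  shows "w * Mn g (real n) \<le> 1 - (2-w) * p g n"
proof -
  define x where "x = real n"
  have x: "x \<ge> 2" using n unfolding x_def by simp
  define D where "D = (2*x+3*g)*(2*x+3*g-2)"
  define N where "N = 2 * x * (x - 1) + (6 * x - 4) * g + 6 * g^2"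
  have D: "D > 0" unfolding D_def using x g by (intro mult_pos_pos) auto
  have pe: "p g n = N / D" unfolding p_def N_def D_def x_def ..
  have Me: "Mn g (real n) = (N - 6*g^2)/D" unfolding Mn_def N_def D_def x_def
    by (simp add: algebra_simps)
  have key: "1 - (2-w) * p g n - w * Mn g (real n) = g*(2 - 3*g + 6*w*g)/D"
  proof -
    have k1: "1 - (2-w)*(N/D) - w*((N-6*g^2)/D) = (D - 2*N + 6*w*g^2)/D" using D by (simp add: field_simps)
    have k2: "D - 2*N = g*(2-3*g)" unfolding D_def N_def by (simp add: algebra_simps power2_eq_square)
    have "D - 2*N + 6*w*g^2 = g*(2 - 3*g + 6*w*g)" using k2 by (simp add: algebra_simps power2_eq_square)
    then show ?thesis unfolding pe Me k1 by simp
  qed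
  have w0': "g \<le> w*(2*g+1)" using w0 g by (simp add: field_simps)
  have "(2 - 3*g + 6*w*g)*(2*g+1) = (2-3*g)*(2*g+1) + 6*g*(w*(2*g+1))" by (simp add: algebra_simps)
  also have "\<dots> \<ge> (2-3*g)*(2*g+1) + 6*g*g" using w0' g by (simp add: mult_left_mono)
  finally have "(2 - 3*g + 6*w*g)*(2*g+1) \<ge> 2 + g" by (simp add: algebra_simps)
  then have "2 - 3*g + 6*w*g > 0" using g
    by (smt (verit, best) mult_le_cancel_right zero_less_mult_iff)
  then have "g*(2 - 3*g + 6*w*g)/D \<ge> 0" using g D by simp
  then show ?thesis using key by linarith
qed



definition aa :: "real \<Rightarrow> nat \<Rightarrow> real" where "aa g n = 1 + 2 * nu g n"

definition alpha :: "real \<Rightarrow> nat \<Rightarrow> real" where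
  "alpha g n = (if n < 2 then 0 else if even n
     then (49/100) * (1 - p g (n+1)) / (\<bar>q g n\<bar> * aa g (n+1))
     else \<bar>q g n\<bar> * aa g n / ((49/100) * (1 - p g n)))"

lemma rr_lt_half: "g > 0 \<Longrightarrow> n \<ge> 2 \<Longrightarrow> rr g n < 1/2"
proof -
  assume g: "g > 0" and n: "n \<ge> 2"
  have "(g+1)/(2*(2*g+1)) < 1/2" using g by (simp add: field_simps)
  then show ?thesis using rr_le2[OF g n] rr_2[OF g] by linarith
qed

lemma w0_le: "g > 0 \<Longrightarrow> n \<ge> 2 \<Longrightarrow> g/(2*g+1) \<le> 1 - 2 * rr g n"
proof -
  assume g: "g > 0" and n: "n \<ge> 2"
  have "2 * rr g n \<le> 2 * rr g 2" using rr_le2[OF g n] by simp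
  also have "2 * rr g 2 = (g+1)/(2*g+1)" using rr_2[OF g] g by (simp add: field_simps)
  finally have "2 * rr g n \<le> (g+1)/(2*g+1)" .
  moreover have "1 - (g+1)/(2*g+1) = g/(2*g+1)" using g by (simp add: field_simps)
  ultimately show ?thesis by linarith
qed

lemma aa_even: "g > 0 \<Longrightarrow> even n \<Longrightarrow> aa g n = 1 + 2 * rr g n"
  unfolding aa_def by (simp add: nu_eq)

lemma aa_odd: "g > 0 \<Longrightarrow> odd n \<Longrightarrow> aa g n = 1 - 2 * rr g n"
  unfolding aa_def by (simp add: nu_eq)

lemma odd_term:
  assumes g: "g > 0" and n: "n \<ge> 3" and od: "odd n"
  shows "aa g n * (p g n + \<bar>q g n\<bar> / alpha g n + \<bar>q g (n-1)\<bar> * alpha g (n-1)) \<le> 1 - 1/150"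
proof -
  have a: "aa g n = 1 - 2 * rr g n" using aa_odd[OF g od] .
  have a0: "aa g n > 0" "aa g n \<le> 1" using a rr_lt_half[OF g, of n] rr_pos[OF g, of n] n by auto
  have Q: "\<bar>q g n\<bar> > 0" "\<bar>q g (n-1)\<bar> > 0" using q_pos[OF g] n by auto
  have P: "1 - p g n > 0" "p g n > 0" "p g n \<le> 2/3" using p_lt1[OF g] p_pos[OF g] p_le[OF g] n by auto
  have al1: "alpha g n = \<bar>q g n\<bar> * aa g n / ((49/100) * (1 - p g n))"
    unfolding alpha_def using n od by simp
  have ev: "even (n-1)" "n - 1 + 1 = n" "\<not> (n - 1 < 2)" using od n by auto
  have al2: "alpha g (n-1) = (49/100) * (1 - p g n) / (\<bar>q g (n-1)\<bar> * aa g n)"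
    unfolding alpha_def using ev by simp
  have t1: "\<bar>q g n\<bar> / alpha g n = (49/100) * (1 - p g n) / aa g n"
    unfolding al1 using Q a0 P by (simp add: field_simps)
  have t2: "\<bar>q g (n-1)\<bar> * alpha g (n-1) = (49/100) * (1 - p g n) / aa g n"
    unfolding al2 using Q a0 P by (simp add: field_simps)
  have "aa g n * (p g n + \<bar>q g n\<bar> / alpha g n + \<bar>q g (n-1)\<bar> * alpha g (n-1))
      = aa g n * p g n + (98/100) * (1 - p g n)"
    unfolding t1 t2 using a0 by (simp add: field_simps)
  also have "\<dots> \<le> p g n + (98/100) * (1 - p g n)"
    using a0 P by (simp add: mult_left_le_one_le)
  also have "\<dots> = 98/100 + p g n / 50" by (simp add: field_simps)
  also have "\<dots> \<le> 1 - 1/150" using P by linarith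
  finally show ?thesis .
qed

lemma At_nonneg: "g > 0 \<Longrightarrow> x \<ge> 1 \<Longrightarrow> At g x \<ge> 0"
  unfolding At_def by (intro divide_nonneg_pos mult_nonneg_nonneg mult_pos_pos) auto

lemma even_term:
  assumes g: "g > 0" and n: "n \<ge> 2" and ev: "even n"
  shows "aa g n * (p g n + \<bar>q g n\<bar> / alpha g n + \<bar>q g (n-1)\<bar> * alpha g (n-1))
     \<le> 1 - g/(25*(2*g+1)*(2+3*g)^2)"
proof -
  define w where "w = 1 - 2 * rr g n"
  define th :: real where "th = 49/100"
  define M where "M = Mn g (real n)"
  define cn where "cn = 1 + (2*g+1)/(2*g+real n)"
  have a: "aa g n = 2 - w" unfolding w_def aa_even[OF g ev] by simp
  have w0: "g/(2*g+1) \<le> w" unfolding w_def using w0_le[OF g n] .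
  have wpos: "w > 0" using w0 g by (smt (verit) divide_pos_pos)
  have w1: "w \<le> 1" unfolding w_def using rr_pos[OF g, of n] by simp
  have Qp: "\<bar>q g n\<bar> > 0" using q_pos[OF g] n by simp
  have P: "p g n > 0" "1 - p g (n+1) > 0" using p_pos[OF g] p_lt1[OF g] n by auto
  have od1: "odd (n+1)" using ev by simp
  have a1: "aa g (n+1) = 1 - 2 * rr g (n+1)" using aa_odd[OF g od1] .
  have a1pos: "aa g (n+1) > 0" unfolding a1 using rr_lt_half[OF g, of "n+1"] n by simp
  have rS: "rr g (n+1) = rr g n * ((g + real n)/(2*g + real n))" using rr_Suc[of g n] by simp
  have a1le: "aa g (n+1) \<le> w * cn"
  proof -
    have d: "2*g + real n > 0" using g by simp
    have "aa g (n+1) = w + 2 * rr g n * (g/(2*g+real n))"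
      unfolding a1 rS w_def using d by (simp add: field_simps)
    also have "\<dots> \<le> w + g/(2*g+real n)"
    proof -
      have "2 * rr g n \<le> 1" using rr_lt_half[OF g n] by simp
      moreover have "g/(2*g+real n) \<ge> 0" using g by simp
      ultimately have "2 * rr g n * (g/(2*g+real n)) \<le> 1 * (g/(2*g+real n))" by (rule mult_right_mono)
      then show ?thesis by linarith
    qed
    also have "g/(2*g+real n) = (g/(2*g+1)) * ((2*g+1)/(2*g+real n))"
    proof -
      have d1: "2*g+1 \<noteq> 0" using g by simp
      show ?thesis using d1 by simp
    qed
    also have "\<dots> \<le> w * ((2*g+1)/(2*g+real n))" using w0 g d by (intro mult_right_mono) auto
    finally show ?thesis unfolding cn_def by (simp add: algebra_simps)
  qed
  have alpha_n: "alpha g n = th * (1 - p g (n+1)) / (\<bar>q g n\<bar> * aa g (n+1))"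
    unfolding alpha_def th_def using n ev by simp
  have T1e: "\<bar>q g n\<bar> / alpha g n = aa g (n+1) / th * (\<bar>q g n\<bar>^2 / (1 - p g (n+1)))"
    unfolding alpha_n th_def using Qp P a1pos by (simp add: field_simps power2_eq_square)
  have KBn: "\<bar>q g n\<bar>^2 / (1 - p g (n+1)) \<le> At g (real n)" using KB[OF g, of n] n by simp
  have Atn: "At g (real n) \<ge> 0" using At_nonneg[OF g, of "real n"] n by simp
  have T1: "\<bar>q g n\<bar> / alpha g n \<le> w * cn / th * At g (real n)"
  proof -
    have "aa g (n+1) / th * (\<bar>q g n\<bar>^2 / (1 - p g (n+1))) \<le> (w * cn) / th * At g (real n)"
      using a1le KBn a1pos P unfolding th_def
      by (intro mult_mono divide_right_mono) auto
    then show ?thesis using T1e by simp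
  qed
  define H where "H = (if n = 2 then cn * At g 2 else At g (real n - 1) + 2 * At g (real n))"
  have TT: "\<bar>q g n\<bar> / alpha g n + \<bar>q g (n-1)\<bar> * alpha g (n-1) \<le> w / th * H"
  proof (cases "n = 2")
    case True
    have "alpha g (n-1) = 0" unfolding alpha_def using True by simp
    then show ?thesis using T1 True unfolding H_def by simp
  next
    case False
    then have n4: "n \<ge> 4" using n ev by presburger
    have od: "odd (n-1)" using ev n by simp
    have n1: "n - 1 \<ge> 1" "\<not> (n - 1 < 2)" using n4 by auto
    have alpha_m: "alpha g (n-1) = \<bar>q g (n-1)\<bar> * aa g (n-1) / (th * (1 - p g (n-1)))"
      unfolding alpha_def th_def using n1 od by simp
    have am: "aa g (n-1) = 1 - 2 * rr g (n-1)" using aa_odd[OF g od] .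
    have "n - 1 \<ge> 2" using n4 by simp
    then have "rr g (n-1) < 1/2" using rr_lt_half[OF g] by blast
    then have ampos: "aa g (n-1) > 0" unfolding am by simp
    have amle: "aa g (n-1) \<le> w" unfolding am w_def using rr_mono[OF g, of "n-1" n] by simp
    have Pm: "1 - p g (n-1) > 0" using p_lt1[OF g n1(1)] .
    have T2e: "\<bar>q g (n-1)\<bar> * alpha g (n-1) = aa g (n-1) / th * (\<bar>q g (n-1)\<bar>^2 / (1 - p g (n-1)))"
      unfolding alpha_m th_def using Pm by (simp add: field_simps power2_eq_square)
    have KAm: "\<bar>q g (n-1)\<bar>^2 / (1 - p g (n-1)) \<le> At g (real n - 1)"
      using KA[OF g n1(1)] n4 by (simp add: of_nat_diff)
    have T2: "\<bar>q g (n-1)\<bar> * alpha g (n-1) \<le> w / th * At g (real n - 1)"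
    proof -
      have "aa g (n-1) / th * (\<bar>q g (n-1)\<bar>^2 / (1 - p g (n-1))) \<le> w / th * At g (real n - 1)"
        using amle KAm ampos Pm unfolding th_def
        by (intro mult_mono divide_right_mono) auto
      then show ?thesis using T2e by simp
    qed
    have cn2: "cn \<le> 2" unfolding cn_def using g n4 by simp
    have "w * cn / th * At g (real n) \<le> w * 2 / th * At g (real n)"
      using cn2 wpos Atn unfolding th_def by (intro mult_right_mono divide_right_mono mult_left_mono) auto
    then have "\<bar>q g n\<bar> / alpha g n + \<bar>q g (n-1)\<bar> * alpha g (n-1) \<le> w / th * At g (real n - 1) + w * 2 / th * At g (real n)"
      using T1 T2 by linarith
    also have "\<dots> = w / th * H" unfolding H_def using False by (simp add: algebra_simps)
    finally show ?thesis .
  qed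
  have KH: "(10000/2401) * H \<le> M"
  proof (cases "n = 2")
    case True
    then show ?thesis unfolding H_def M_def cn_def using K2[OF g] by simp
  next
    case False
    then have "n \<ge> 4" using n ev by presburger
    then have n4: "real n \<ge> 4" by simp
    then show ?thesis unfolding H_def M_def using K4[OF n4 g] False by simp
  qed
  have Mlow: "2/(2+3*g)^2 \<le> M" unfolding M_def using M_low[of "real n" g] n g by simp
  have M0: "M \<ge> 0" using Mlow by (smt (verit) divide_nonneg_nonneg zero_le_power2)
  have S: "w * M \<le> 1 - (2-w) * p g n" unfolding M_def using S_lemma[OF g n w0] .
  have WH: "w / th * H \<le> (49/100) * w * M"
  proof -
    have "H \<le> (2401/10000) * M" using KH by simp
    then have "w * H \<le> w * ((2401/10000) * M)" using wpos by (simp add: mult_left_mono)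
    then show ?thesis unfolding th_def by (simp add: field_simps)
  qed
  have "aa g n * (p g n + \<bar>q g n\<bar> / alpha g n + \<bar>q g (n-1)\<bar> * alpha g (n-1))
      \<le> (2-w) * (p g n + (49/100) * w * M)"
  proof -
    have "p g n + \<bar>q g n\<bar> / alpha g n + \<bar>q g (n-1)\<bar> * alpha g (n-1) \<le> p g n + (49/100) * w * M"
      using TT WH by linarith
    then show ?thesis unfolding a using w1 by (intro mult_left_mono) auto
  qed
  also have "\<dots> = (2-w) * p g n + (2-w) * ((49/100) * w * M)" by (simp add: algebra_simps)
  also have "\<dots> \<le> (2-w) * p g n + 2 * ((49/100) * w * M)"
    using w1 wpos M0 by (intro add_left_mono mult_right_mono) auto
  also have "\<dots> \<le> 1 - (2/100) * (w * M)" using S by (simp add: algebra_simps)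
  also have "\<dots> \<le> 1 - (2/100) * ((g/(2*g+1)) * (2/(2+3*g)^2))"
  proof -
    define u where "u = (g/(2*g+1)) * (2/(2+3*g)^2)"
    have hu: "u \<le> w * M" unfolding u_def using w0 Mlow g wpos by (intro mult_mono) auto
    have "1 - (2/100) * (w * M) \<le> 1 - (2/100) * u" using hu by linarith
    then show ?thesis by (simp only: u_def)
  qed
  also have "\<dots> = 1 - g/(25*(2*g+1)*(2+3*g)^2)" by (simp add: field_simps)
  finally show ?thesis .
qed



lemma alpha_pos:
  assumes g: "g > 0" and n: "n \<ge> 2"
  shows "alpha g n > 0"
proof (cases "even n")
  case True
  have od1: "odd (n+1)" using True by simp
  have a1: "aa g (n+1) > 0" unfolding aa_odd[OF g od1] using rr_lt_half[OF g, of "n+1"] n by simp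
  have "\<bar>q g n\<bar> > 0" using q_pos[OF g] n by simp
  moreover have "1 - p g (n+1) > 0" using p_lt1[OF g] n by simp
  ultimately show ?thesis unfolding alpha_def using True n a1 by simp
next
  case False
  have a1: "aa g n > 0" unfolding aa_odd[OF g False] using rr_lt_half[OF g n] by simp
  have "\<bar>q g n\<bar> > 0" using q_pos[OF g] n by simp
  moreover have "1 - p g n > 0" using p_lt1[OF g] n by simp
  ultimately show ?thesis unfolding alpha_def using False n a1 by simp
qed

theorem propositionA1:
  fixes \<gamma> :: real
  assumes "\<gamma> > 0"
  shows "\<exists>\<alpha> :: nat \<Rightarrow> real. (\<forall>n\<ge>2. \<alpha> n > 0) \<and> \<alpha> 1 = 0 \<and>
    (\<exists>c < 1. \<forall>n\<ge>2. (1 + 2 * nu \<gamma> n) *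
        (p \<gamma> n + \<bar>q \<gamma> n\<bar> / \<alpha> n + \<bar>q \<gamma> (n - 1)\<bar> * \<alpha> (n - 1)) \<le> c)"
proof -
  have g: "\<gamma> > 0" by fact
  define d where "d = \<gamma>/(25*(2*\<gamma>+1)*(2+3*\<gamma>)^2)"
  have dpos: "d > 0" unfolding d_def using g by simp
  have dle: "d \<le> 1/150"
  proof -
    have h1: "\<gamma>/(2*\<gamma>+1) \<le> 1/2" using g by (simp add: field_simps)
    have h2: "(2+3*\<gamma>)^2 \<ge> 4" using g by (simp add: power2_eq_square algebra_simps)
    have "d = (\<gamma>/(2*\<gamma>+1)) / (25*(2+3*\<gamma>)^2)" unfolding d_def by (simp add: field_simps)
    also have "\<dots> \<le> (1/2) / (25*4)"
      by (rule frac_le[OF _ h1]) (use h2 in auto)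
    finally show ?thesis by simp
  qed
  have main: "\<forall>n\<ge>2. (1 + 2 * nu \<gamma> n) *
        (p \<gamma> n + \<bar>q \<gamma> n\<bar> / alpha \<gamma> n + \<bar>q \<gamma> (n - 1)\<bar> * alpha \<gamma> (n - 1)) \<le> 1 - d"
  proof (intro allI impI)
    fix n :: nat assume n: "n \<ge> 2"
    show "(1 + 2 * nu \<gamma> n) *
        (p \<gamma> n + \<bar>q \<gamma> n\<bar> / alpha \<gamma> n + \<bar>q \<gamma> (n - 1)\<bar> * alpha \<gamma> (n - 1)) \<le> 1 - d"
    proof (cases "even n")
      case True
      show ?thesis using even_term[OF g n True] unfolding aa_def d_def .
    next
      case False
      have n3: "n \<ge> 3" using n False by presburger
      show ?thesis using odd_term[OF g n3 False] dle unfolding aa_def by linarith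
    qed
  qed
  show ?thesis
    apply (rule exI[of _ "alpha \<gamma>"])
    using alpha_pos[OF g] main dpos by (auto simp: alpha_def intro!: exI[of _ "1 - d"])
qed


end
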